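(* Let $q$ be an odd prime power, and let $P(q^2)$ be the Paley graph on $\mathbb{F}_{q^2}$. Let $\varphi$ be the automorphism of $P(q^2)$ given by $\varphi(\gamma)=\gamma^q$. (1) If $q\equiv 1\pmod 4$, then $\varphi$ interchanges only non-adjacent vertices. (2) If $q\equiv 3\pmod 4$, then $\varphi$ interchanges only adjacent vertices.
   Context: The Paley graph $P(r)$, for a prime power $r\equiv 1\pmod 4$, has vertex set $\mathbb{F}_r$, with $x,y$ adjacent iff $x-y$ is a non-zero square in $\mathbb{F}_r$. $\varphi$ is an involution; it "interchanges only non-adjacent (resp. adjacent) vertices" if every $\gamma$ with $\varphi(\gamma)\ne\gamma$ is non-adjacent (resp. adjacent) to $\varphi(\gamma)$. *)

theory Defs
  imports Main "HOL-Computational_Algebra.Primes"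
begin

definition paley_adj :: "'a::field \<Rightarrow> 'a \<Rightarrow> bool" where
  "paley_adj x y \<longleftrightarrow> x - y \<noteq> 0 \<and> (\<exists>z. x - y = z ^ 2)"

definition interchanges_only_nonadjacent :: "('v \<Rightarrow> 'v \<Rightarrow> bool) \<Rightarrow> ('v \<Rightarrow> 'v) \<Rightarrow> bool" where
  "interchanges_only_nonadjacent adj f \<longleftrightarrow> (\<forall>g. f g \<noteq> g \<longrightarrow> \<not> adj g (f g))"

definition interchanges_only_adjacent :: "('v \<Rightarrow> 'v \<Rightarrow> bool) \<Rightarrow> ('v \<Rightarrow> 'v) \<Rightarrow> bool" where
  "interchanges_only_adjacent adj f \<longleftrightarrow> (\<forall>g. f g \<noteq> g \<longrightarrow> adj g (f g))"

end

theory Submission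
  imports Defs "HOL-Number_Theory.Number_Theory" "HOL-Computational_Algebra.Polynomial"
begin

lemma pow_card_same:
  fixes x :: "'a :: {field,finite}"
  shows "x ^ card (UNIV :: 'a set) = x"
proof (cases "x = 0")
  case False
  have "x * (\<Prod>y\<in>UNIV-{0}. x * y) = x * x ^ (card (UNIV :: 'a set) - 1) * \<Prod>(UNIV-{0})"
    by (simp add: prod.distrib mult_ac)
  also have "x * x ^ (card (UNIV :: 'a set) - 1) = x ^ Suc (card (UNIV :: 'a set) - 1)"
    by (subst power_Suc) auto
  also have "Suc (card (UNIV :: 'a set) - 1) = card (UNIV :: 'a set)"
    using finite_UNIV_card_ge_0[where ?'a = 'a] by simp
  also have "(\<Prod>y\<in>UNIV-{0}. x * y) = (\<Prod>y\<in>UNIV-{0}. y)"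
    by (rule prod.reindex_bij_witness[of _ "\<lambda>y. y / x" "\<lambda>y. x * y"]) (use False in auto)
  finally show ?thesis
    by simp
qed (use finite_UNIV_card_ge_0[where ?'a = 'a] in auto)

lemma euler_sq:
  fixes d :: "'a :: {field,finite}"
  assumes odd: "odd (card (UNIV :: 'a set))"
    and d: "d ^ ((card (UNIV :: 'a set) - 1) div 2) = 1"
  shows "\<exists>z. d = z ^ 2"
proof (rule ccontr)
  assume nsq: "\<not> (\<exists>z. d = z ^ 2)"
  define Q where "Q = card (UNIV :: 'a set)"
  define m where "m = (Q - 1) div 2"
  have "(0::'a) \<noteq> 1" by simp
  hence "card {0::'a, 1} \<le> Q" unfolding Q_def by (intro card_mono) auto
  hence Q2: "Q \<ge> 2" by simp
  have Qm: "Q - 1 = 2 * m" using odd Q2 unfolding m_def Q_def[symmetric] by (auto elim!: oddE)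
  have m1: "m \<ge> 1" using Qm Q2 by linarith
  define P :: "'a poly" where "P = monom 1 m - 1"
  have polyP: "poly P x = x ^ m - 1" for x by (simp add: P_def poly_monom)
  have "coeff P m = 1" using m1 by (simp add: P_def coeff_monom)
  hence P0: "P \<noteq> 0" by auto
  have degP: "degree P \<le> m" unfolding P_def
    by (intro degree_diff_le) (auto simp: degree_monom_le)
  define R where "R = {x. poly P x = 0}"
  have cardR: "card R \<le> m" using card_poly_roots_bound[OF P0] degP unfolding R_def by linarith
  define U where "U = (UNIV :: 'a set) - {0}"
  define S where "S = (\<lambda>z. z ^ 2) ` U"
  have "z ^ (Q - 1) = 1" if "z \<noteq> 0" for z :: 'a
  proof -
    have "z * z ^ (Q - 1) = z ^ Q" using Q2 by (metis Suc_diff_1 less_le_trans pos2 power_Suc zero_less_numeral)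
    also have "\<dots> = z" unfolding Q_def by (rule pow_card_same)
    finally show ?thesis using that by simp
  qed
  hence sq1: "z ^ (2 * m) = 1" if "z \<noteq> 0" for z :: 'a using that Qm by metis
  hence SR: "S \<subseteq> R" unfolding S_def R_def U_def
    by (auto simp: polyP power_mult[symmetric])
  have "card U \<le> (\<Sum>s\<in>S. card {z. z ^ 2 = s})"
  proof -
    have "U \<subseteq> (\<Union>s\<in>S. {z. z ^ 2 = s})" unfolding S_def by auto
    hence "card U \<le> card (\<Union>s\<in>S. {z. z ^ 2 = s})" by (intro card_mono) auto
    also have "\<dots> \<le> (\<Sum>s\<in>S. card {z. z ^ 2 = s})" by (rule card_UN_le) simp
    finally show ?thesis .
  qed
  also have "\<dots> \<le> (\<Sum>s\<in>S. 2)"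
  proof (intro sum_mono)
    fix s assume "s \<in> S"
    then obtain w where w: "s = w ^ 2" unfolding S_def by auto
    have "{z. z ^ 2 = s} \<subseteq> {w, -w}" using w by (auto simp: power2_eq_iff)
    hence "card {z. z ^ 2 = s} \<le> card {w, -w}" by (intro card_mono) auto
    also have "\<dots> \<le> 2" by (simp add: card_insert_if)
    finally show "card {z. z ^ 2 = s} \<le> 2" .
  qed
  finally have "card U \<le> 2 * card S" by simp
  moreover have "card U = Q - 1" unfolding U_def Q_def by (simp add: card_Diff_singleton)
  ultimately have cS: "m \<le> card S" using Qm by linarith
  have "d \<in> R" using d by (simp add: R_def polyP m_def Q_def)
  moreover have "d \<notin> S" using nsq unfolding S_def by auto
  ultimately have "insert d S \<subseteq> R" using SR by auto
  hence "card (insert d S) \<le> card R" by (intro card_mono) (auto simp: R_def)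
  with \<open>d \<notin> S\<close> cS cardR show False by simp
qed


theorem lemma26:
  fixes q p k :: nat
  assumes "prime p" and "k \<ge> 1" and "q = p ^ k" and "odd q"
    and "card (UNIV :: 'a::{field,finite} set) = q ^ 2"
  shows "(q mod 4 = 1 \<longrightarrow> interchanges_only_nonadjacent (paley_adj :: 'a \<Rightarrow> 'a \<Rightarrow> bool) (\<lambda>\<gamma>. \<gamma> ^ q))
       \<and> (q mod 4 = 3 \<longrightarrow> interchanges_only_adjacent (paley_adj :: 'a \<Rightarrow> 'a \<Rightarrow> bool) (\<lambda>\<gamma>. \<gamma> ^ q))"
proof -
  define Q where "Q = card (UNIV :: 'a set)"
  have fin: "finite (UNIV :: 'a set)" by simp
  have cpos: "CHAR('a) > 0" using finite_imp_CHAR_pos[OF fin] .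
  have cprime: "prime CHAR('a)" using prime_CHAR_semidom[OF cpos] .
  have "CHAR('a) dvd p ^ (2 * k)" using CHAR_dvd_CARD[where 'a='a] assms(3,5)
    by (simp add: power_mult mult.commute)
  hence "CHAR('a) dvd p" using prime_dvd_power[OF cprime] by auto
  hence cp: "CHAR('a) = p" using cprime assms(1) by (simp add: primes_dvd_imp_eq)
  have q0: "q > 0" using assms(4) by (cases q) auto
  have frob: "(x + y) ^ q = x ^ q + y ^ q" for x y :: 'a
    using freshmans_dream'[OF cprime, of q k] assms(3) cp by simp
  have negq: "(- x) ^ q = - (x ^ q)" for x :: 'a using assms(4) by simp
  have frobm: "(x - y) ^ q = x ^ q - y ^ q" for x y :: 'a
    using frob[of x "-y"] negq[of y] by simp
  have pQ: "x ^ (q * q) = x" for x :: 'a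
    using pow_card_same[where x=x] assms(5) by (simp add: power2_eq_square)
  have oddQ: "odd Q" using assms(4,5) Q_def by simp
  have "p dvd q" using assms(2,3) by (simp add: dvd_power)
  hence oddp: "odd p"
  proof -
    assume pq: "p dvd q"
    show "odd p"
    proof
      assume "even p"
      hence "even q" using pq by (rule dvd_trans)
      thus False using assms(4) by simp
    qed
  qed
  have m1: "(-1::'a) \<noteq> 1"
  proof
    assume h: "(-1::'a) = 1"
    have "(2::'a) = 1 - (-1)" by simp
    also have "\<dots> = 0" using h by simp
    finally have "(of_nat 2 :: 'a) = 0" by simp
    hence "CHAR('a) dvd 2" by (simp only: of_nat_eq_0_iff_char_dvd)
    hence "p dvd 2" using cp by simp
    hence "p \<le> 2" by (rule dvd_imp_le) simp
    moreover have "p \<ge> 2" using prime_ge_2_nat[OF assms(1)] .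
    ultimately have "p = 2" by simp
    with oddp show False by simp
  qed
  have Qe: "(Q - 1) div 2 = (q - 1) * ((q + 1) div 2)"
  proof -
    obtain t where t: "q = 2 * t + 1" using assms(4) by (auto elim!: oddE)
    have "Q = q * q" using assms(5) Q_def by (simp add: power2_eq_square)
    thus ?thesis using t by (simp add: algebra_simps)
  qed
  have key: "(g - g ^ q) ^ ((Q - 1) div 2) = (-1) ^ ((q + 1) div 2)" if ng: "g ^ q \<noteq> g" for g :: 'a
  proof -
    define d where "d = g - g ^ q"
    have d0: "d \<noteq> 0" using ng by (simp add: d_def)
    have "d ^ q = - d" unfolding d_def frobm by (simp add: power_mult[symmetric] pQ)
    moreover have "d ^ q = d * d ^ (q - 1)" using q0 by (cases q) auto
    ultimately have "d * d ^ (q - 1) = d * (-1)" by simp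
    hence dq: "d ^ (q - 1) = -1" by (simp only: mult_left_cancel[OF d0])
    show ?thesis unfolding d_def[symmetric] Qe power_mult dq ..
  qed
  have sq_pow: "z ^ (Q - 1) = 1" if "z \<noteq> 0" for z :: 'a
  proof -
    have "Q > 0" using q0 assms(5) Q_def by simp
    hence "z * z ^ (Q - 1) = z ^ Q" by (cases Q) auto
    also have "\<dots> = z" unfolding Q_def by (rule pow_card_same)
    finally show ?thesis using that by simp
  qed
  have Qev: "Q - 1 = 2 * ((Q - 1) div 2)" using oddQ by (simp add: odd_pos)
  show ?thesis
  proof (intro conjI impI)
    assume q1: "q mod 4 = 1"
    have "odd ((q + 1) div 2)" using q1 by presburger
    show "interchanges_only_nonadjacent paley_adj (\<lambda>\<gamma>::'a. \<gamma> ^ q)"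
      unfolding interchanges_only_nonadjacent_def paley_adj_def
    proof (intro allI impI notI)
      fix g :: 'a assume ng: "g ^ q \<noteq> g" and h: "g - g ^ q \<noteq> 0 \<and> (\<exists>z. g - g ^ q = z ^ 2)"
      then obtain z where z: "g - g ^ q = z ^ 2" by auto
      have z0: "z \<noteq> 0" using h z by auto
      have "(g - g ^ q) ^ ((Q - 1) div 2) = 1"
        unfolding z by (simp only: power_mult[symmetric] Qev[symmetric] sq_pow[OF z0])
      with key[OF ng] \<open>odd ((q + 1) div 2)\<close> m1 show False by simp
    qed
  next
    assume q3: "q mod 4 = 3"
    have "even ((q + 1) div 2)" using q3 by presburger
    show "interchanges_only_adjacent paley_adj (\<lambda>\<gamma>::'a. \<gamma> ^ q)"
      unfolding interchanges_only_adjacent_def paley_adj_def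
    proof (intro allI impI conjI)
      fix g :: 'a assume ng: "g ^ q \<noteq> g"
      show "g - g ^ q \<noteq> 0" using ng by simp
      have "(g - g ^ q) ^ ((Q - 1) div 2) = 1" using key[OF ng] \<open>even ((q + 1) div 2)\<close> by simp
      hence "(g - g ^ q) ^ ((card (UNIV :: 'a set) - 1) div 2) = 1" by (simp only: Q_def)
      thus "\<exists>z. g - g ^ q = z ^ 2" by (rule euler_sq[OF oddQ[unfolded Q_def]])
    qed
  qed
qed

end
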